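(* Let $2\leq k<n$, let $K\subset\mathbb{C}^n$ be a convex body and let $p_0$ be a point in the interior of $K$. If for every complex $k$-dimensional affine subspace $P$ through $p_0$ the section $P\cap K$ is a (complex, $k$-dimensional) ellipsoid in $P$, then $K$ is an ellipsoid.
   Context: A convex body is a compact convex subset of $\mathbb{C}^n$ with nonempty interior. A (complex) ellipsoid in a complex affine space of dimension $m$ is the image of the closed Euclidean unit ball of $\mathbb{C}^m$ under an injective complex affine map into that space. *)

theory Defs
  imports "HOL-Analysis.Analysis"
begin

text \<open>C^n is modelled as complex^'n with n = CARD('n). Complex scalar
multiplication is componentwise: c *s x.\<close>

definition convex_body :: "(complex^'n) set \<Rightarrow> bool" where
  "convex_body K \<longleftrightarrow> compact K \<and> convex K \<and> interior K \<noteq> {}"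

definition clin_comb :: "nat \<Rightarrow> (nat \<Rightarrow> complex^'n) \<Rightarrow> (nat \<Rightarrow> complex) \<Rightarrow> complex^'n" where
  "clin_comb m v z = (\<Sum>i<m. z i *s v i)"

definition clin_indep :: "nat \<Rightarrow> (nat \<Rightarrow> complex^'n) \<Rightarrow> bool" where
  "clin_indep m v \<longleftrightarrow> (\<forall>z. clin_comb m v z = 0 \<longrightarrow> (\<forall>i<m. z i = 0))"

definition complex_affine_subspace_through :: "nat \<Rightarrow> complex^'n \<Rightarrow> (complex^'n) set \<Rightarrow> bool" where
  "complex_affine_subspace_through m p P \<longleftrightarrow>
     (\<exists>v. clin_indep m v \<and> P = {p + clin_comb m v z | z. True})"

text \<open>C^m modelled as coefficient functions z :: nat => complex vanishing from m on.\<close>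
definition cspace :: "nat \<Rightarrow> (nat \<Rightarrow> complex) set" where
  "cspace m = {z. \<forall>i\<ge>m. z i = 0}"

definition cunit_ball :: "nat \<Rightarrow> (nat \<Rightarrow> complex) set" where
  "cunit_ball m = {z \<in> cspace m. (\<Sum>i<m. (cmod (z i))\<^sup>2) \<le> 1}"

text \<open>E is a complex ellipsoid in the m-dimensional complex affine space P:
  the image of the closed unit ball of C^m under an injective complex affine
  map C^m \<rightarrow> P (every complex affine map C^m \<rightarrow> C^n has the form
  z \<mapsto> a + sum z_i v_i).\<close>
definition complex_ellipsoid_in :: "nat \<Rightarrow> (complex^'n) set \<Rightarrow> (complex^'n) set \<Rightarrow> bool" where
  "complex_ellipsoid_in m P E \<longleftrightarrow>
     (\<exists>a v. let f = (\<lambda>z. a + clin_comb m v z) in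
        inj_on f (cspace m) \<and> f ` cspace m \<subseteq> P \<and> E = f ` cunit_ball m)"

definition complex_ellipsoid :: "(complex^'n) set \<Rightarrow> bool" where
  "complex_ellipsoid E \<longleftrightarrow> complex_ellipsoid_in CARD('n) UNIV E"

end

theory Submission
  imports Defs
begin

lemma clin_comb_add: "clin_comb m v (\<lambda>i. z i + w i) = clin_comb m v z + clin_comb m v w"
  unfolding clin_comb_def by (simp add: vector_sadd_rdistrib sum.distrib)

lemma clin_comb_scale: "clin_comb m v (\<lambda>i. c * z i) = c *s clin_comb m v z"
  unfolding clin_comb_def by (simp add: vec.scale_sum_right vector_smult_assoc)

lemma clin_comb_lin: "clin_comb m v (\<lambda>i. a * z i + b * w i) = a *s clin_comb m v z + b *s clin_comb m v w"
  by (simp add: clin_comb_add [of m v "\<lambda>i. a * z i" "\<lambda>i. b * w i", simplified] clin_comb_scale)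

lemma clin_comb_cong: "(\<And>i. i < m \<Longrightarrow> z i = w i) \<Longrightarrow> clin_comb m v z = clin_comb m v w"
  unfolding clin_comb_def by (rule sum.cong) auto

lemma clin_comb_zero [simp]: "clin_comb m v (\<lambda>i. 0) = 0"
  unfolding clin_comb_def by simp

lemma clin_comb_in_span: "clin_comb m v z \<in> vec.span (v ` {..<m})"
  unfolding clin_comb_def
  by (intro vec.span_sum vec.span_scale vec.span_base) auto

lemma clin_indep_inj: assumes "clin_indep m v" shows "inj_on v {..<m}"
proof (rule inj_onI, rule ccontr)
  fix i j assume ij: "i \<in> {..<m}" "j \<in> {..<m}" "v i = v j" "i \<noteq> j"
  define z where "z = (\<lambda>l. if l = i then 1 else if l = j then -1 else (0::complex))"
  have "clin_comb m v z = (\<Sum>l\<in>{i,j}. z l *s v l)"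
    unfolding clin_comb_def using ij
    by (intro sum.mono_neutral_right) (auto simp: z_def)
  also have "\<dots> = 0" using ij by (simp add: z_def)
  finally have "clin_comb m v z = 0" .
  then have "z i = 0" using assms ij unfolding clin_indep_def by blast
  then show False by (simp add: z_def)
qed

lemma clin_indep_independent: assumes "clin_indep m v" shows "vec.independent (v ` {..<m})"
proof -
  have inj: "inj_on v {..<m}" using clin_indep_inj[OF assms] .
  show ?thesis unfolding vec.independent_explicit
  proof (intro conjI allI impI ballI)
    show "finite (v ` {..<m})" by simp
    fix c x assume h: "(\<Sum>w\<in>v ` {..<m}. c w *s w) = 0" and x: "x \<in> v ` {..<m}"
    have "clin_comb m v (\<lambda>i. c (v i)) = 0"
      using h unfolding clin_comb_def by (simp add: sum.reindex[OF inj])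
    then have "\<forall>i<m. c (v i) = 0" using assms unfolding clin_indep_def by blast
    then show "c x = 0" using x by auto
  qed
qed

lemma independent_clin_indep:
  assumes inj: "inj_on v {..<m}" and ind: "vec.independent (v ` {..<m})"
  shows "clin_indep m v"
  unfolding clin_indep_def
proof (intro allI impI)
  fix z i assume h: "clin_comb m v z = 0" and i: "i < m"
  define c where "c = (\<lambda>w. z (the_inv_into {..<m} v w))"
  have "(\<Sum>w\<in>v ` {..<m}. c w *s w) = clin_comb m v z"
    unfolding clin_comb_def c_def using inj
    by (simp add: sum.reindex the_inv_into_f_f)
  then have "\<forall>w\<in>v ` {..<m}. c w = 0" using ind h unfolding vec.independent_explicit by auto
  then have "c (v i) = 0" using i by auto
  then show "z i = 0" using inj i by (simp add: c_def the_inv_into_f_f)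
qed

lemma span_clin_comb:
  assumes inj: "inj_on v {..<m}" and x: "x \<in> vec.span (v ` {..<m})"
  shows "\<exists>z\<in>cspace m. x = clin_comb m v z"
proof -
  obtain u where u: "x = (\<Sum>w\<in>v ` {..<m}. u w *s w)"
    using x vec.span_finite[of "v ` {..<m}"] by auto
  let ?z = "\<lambda>i. if i < m then u (v i) else 0"
  have "x = clin_comb m v ?z" unfolding u clin_comb_def using inj
    by (simp add: sum.reindex)
  moreover have "?z \<in> cspace m" by (simp add: cspace_def)
  ultimately show ?thesis by blast
qed

lemma dim_UNIV_vec: "vec.dim (UNIV :: (complex^'n) set) = CARD('n)"
  by (simp add: card_cart_basis)

lemma clin_indep_le: "clin_indep m (v :: nat \<Rightarrow> complex^'n) \<Longrightarrow> m \<le> CARD('n)"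
  using vec.independent_card_le_dim[of "v ` {..<m}" UNIV] clin_indep_independent[of m v]
    clin_indep_inj[of m v] dim_UNIV_vec[where 'n='n] by (simp add: card_image)

lemma extend_pair:
  fixes x y :: "complex^'n"
  assumes "2 \<le> k" "k \<le> CARD('n)"
  shows "\<exists>v. clin_indep k v \<and> x \<in> vec.span (v ` {..<k}) \<and> y \<in> vec.span (v ` {..<k})"
proof -
  obtain B0 where B0: "B0 \<subseteq> {x,y}" "vec.independent B0" "{x,y} \<subseteq> vec.span B0"
    by (rule vec.maximal_independent_subset[of "{x,y}"])
  obtain B where B: "B0 \<subseteq> B" "vec.independent B" "UNIV \<subseteq> vec.span B"
    by (rule vec.maximal_independent_subset_extend[OF subset_UNIV B0(2)])
  have finB: "finite B" using vec.independent_bound_general[OF B(2)] by blast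
  have d1: "vec.dim B = card B" using vec.dim_eq_card_independent[OF B(2)] .
  have "vec.span B = UNIV" using B(3) by auto
  then have "vec.dim B = vec.dim (UNIV :: (complex^'n) set)"
    using vec.dim_span[of B] by simp
  with d1 have cardB: "card B = CARD('n)" using dim_UNIV_vec[where 'n='n] by simp
  have fin0: "finite B0" using B0(1) finite_subset by blast
  have "card B0 \<le> card {x,y}" by (rule card_mono) (auto simp: B0(1))
  also have "card {x,y} \<le> 2" by (cases "x=y") auto
  finally have c0: "card B0 \<le> 2" .
  have "k - card B0 \<le> card (B - B0)"
    using card_Diff_subset[OF fin0 B(1)] cardB assms by simp
  then obtain T where T: "T \<subseteq> B - B0" "card T = k - card B0" "finite T"
    by (rule obtain_subset_with_card_n)
  define C where "C = B0 \<union> T"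
  have finC: "finite C" using fin0 T by (simp add: C_def)
  have cardC: "card C = k" unfolding C_def using T fin0 c0 assms
    by (subst card_Un_disjoint) auto
  have "C \<subseteq> B" using T B(1) by (auto simp: C_def)
  then have indC: "vec.independent C" using vec.independent_mono[OF B(2)] by blast
  obtain h where h: "bij_betw h {..<k} C"
    using finite_same_card_bij[of "{..<k}" C] finC cardC by auto
  have inj: "inj_on h {..<k}" and im: "h ` {..<k} = C" using h by (auto simp: bij_betw_def)
  have "clin_indep k h" using independent_clin_indep[OF inj] indC im by simp
  moreover have "vec.span B0 \<subseteq> vec.span C" by (rule vec.span_mono) (auto simp: C_def)
  then have "{x,y} \<subseteq> vec.span (h ` {..<k})"
    using B0(3) im by blast
  ultimately show ?thesis by blast
qed

lemma clin_comb_restrict: "clin_comb k w (\<lambda>i. if i < k then z i else 0) = clin_comb k w z"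
  by (rule clin_comb_cong) simp

lemma clin_comb_unit: assumes "i < k" shows "clin_comb k w (\<lambda>l. if l = i then 1 else 0) = w i"
proof -
  have "clin_comb k w (\<lambda>l. if l = i then 1 else 0) = (\<Sum>l<k. if i = l then w l else 0)"
    unfolding clin_comb_def by (rule sum.cong) auto
  also have "\<dots> = w i" using assms by simp
  finally show ?thesis .
qed

lemma plane_coords:
  fixes K :: "(complex^'n) set"
  assumes p0: "p0 \<in> interior K" and ind: "clin_indep k v"
    and ell: "complex_ellipsoid_in k {p0 + clin_comb k v z | z. True} ({p0 + clin_comb k v z | z. True} \<inter> K)"
  shows "\<exists>w \<beta>. clin_indep k w \<and> vec.span (w ` {..<k}) = vec.span (v ` {..<k}) \<and>
     (\<Sum>j<k. (cmod (\<beta> j))\<^sup>2) < 1 \<and>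
     (\<forall>\<zeta>. p0 + clin_comb k w \<zeta> \<in> K \<longleftrightarrow> (\<Sum>j<k. (cmod (\<beta> j + \<zeta> j))\<^sup>2) \<le> 1)"
proof -
  define P where "P = {p0 + clin_comb k v z | z. True}"
  obtain a w where injF: "inj_on (\<lambda>z. a + clin_comb k w z) (cspace k)"
    and subF: "(\<lambda>z. a + clin_comb k w z) ` cspace k \<subseteq> P"
    and eqF: "P \<inter> K = (\<lambda>z. a + clin_comb k w z) ` cunit_ball k"
    using ell unfolding complex_ellipsoid_in_def P_def[symmetric] Let_def by blast
  define F where "F = (\<lambda>z. a + clin_comb k w z)"
  define rs where "rs = (\<lambda>z::nat\<Rightarrow>complex. \<lambda>i. if i < k then z i else 0)"
  have rs_cs: "rs z \<in> cspace k" for z by (simp add: rs_def cspace_def)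
  have rs_cc: "clin_comb k w (rs z) = clin_comb k w z" for z
    unfolding rs_def by (rule clin_comb_restrict)
  have zero_cs: "(\<lambda>i. 0) \<in> cspace k" by (simp add: cspace_def)
  have ball_cs: "cunit_ball k \<subseteq> cspace k" by (auto simp: cunit_ball_def)
  have indw: "clin_indep k w"
    unfolding clin_indep_def
  proof (intro allI impI)
    fix z i assume z: "clin_comb k w z = 0" and i: "i < k"
    have "F (rs z) = F (\<lambda>i. 0)" by (simp add: F_def rs_cc z)
    then have "rs z = (\<lambda>i. 0)" using injF rs_cs zero_cs unfolding F_def inj_on_def by blast
    then show "z i = 0" using i by (metis rs_def)
  qed
  have inP: "F z \<in> P" if "z \<in> cspace k" for z using subF that unfolding F_def by blast
  have "a \<in> P" using inP[OF zero_cs] by (simp add: F_def)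
  then obtain za where za: "a = p0 + clin_comb k v za" unfolding P_def by blast
  have wspan: "w i \<in> vec.span (v ` {..<k})" if i: "i < k" for i
  proof -
    have "F (\<lambda>l. if l = i then 1 else 0) \<in> P" by (rule inP) (use i in \<open>auto simp: cspace_def\<close>)
    then obtain z1 where "F (\<lambda>l. if l = i then 1 else 0) = p0 + clin_comb k v z1" unfolding P_def by blast
    then have "w i = clin_comb k v z1 - clin_comb k v za"
      using clin_comb_unit[OF i, of w] za by (simp add: F_def algebra_simps)
    then show ?thesis using clin_comb_in_span vec.span_diff by metis
  qed
  have sub: "w ` {..<k} \<subseteq> vec.span (v ` {..<k})" using wspan by auto
  have injv: "inj_on v {..<k}" by (rule clin_indep_inj[OF ind])
  have injw: "inj_on w {..<k}" by (rule clin_indep_inj[OF indw])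
  have dimv: "vec.dim (vec.span (v ` {..<k})) = k"
    using vec.dim_eq_card_independent[OF clin_indep_independent[OF ind]] card_image[OF injv] by simp
  have "vec.span (v ` {..<k}) \<subseteq> vec.span (w ` {..<k})"
    using vec.card_eq_dim[OF sub] clin_indep_independent[OF indw] card_image[OF injw] dimv by simp
  moreover have "vec.span (w ` {..<k}) \<subseteq> vec.span (v ` {..<k})"
    using vec.span_mono[OF sub] by (simp only: vec.span_span)
  ultimately have spaneq: "vec.span (w ` {..<k}) = vec.span (v ` {..<k})" by blast
  have p0K: "p0 \<in> K" using p0 interior_subset by blast
  have "p0 = p0 + clin_comb k v (\<lambda>i. 0)" by simp
  then have "p0 \<in> P" unfolding P_def by blast
  with p0K obtain \<beta> where \<beta>: "\<beta> \<in> cunit_ball k" "p0 = F \<beta>" using eqF unfolding F_def by blast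
  have \<beta>cs: "\<beta> \<in> cspace k" using \<beta>(1) ball_cs by blast
  have key: "p0 + clin_comb k w \<zeta> \<in> K \<longleftrightarrow> (\<Sum>j<k. (cmod (\<beta> j + \<zeta> j))\<^sup>2) \<le> 1" for \<zeta>
  proof -
    define \<gamma> where "\<gamma> = (\<lambda>i. \<beta> i + rs \<zeta> i)"
    have \<gamma>cs: "\<gamma> \<in> cspace k" using \<beta>cs rs_cs[of \<zeta>] by (auto simp: cspace_def \<gamma>_def)
    have eq: "p0 + clin_comb k w \<zeta> = F \<gamma>"
      unfolding \<beta>(2) F_def \<gamma>_def clin_comb_add rs_cc by (simp add: add.assoc)
    have "F \<gamma> \<in> K \<longleftrightarrow> F \<gamma> \<in> F ` cunit_ball k" using inP[OF \<gamma>cs] eqF unfolding F_def by blast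
    also have "\<dots> \<longleftrightarrow> \<gamma> \<in> cunit_ball k"
      using injF \<gamma>cs ball_cs unfolding F_def inj_on_def by blast
    also have "\<dots> \<longleftrightarrow> (\<Sum>j<k. (cmod (\<beta> j + \<zeta> j))\<^sup>2) \<le> 1"
      using \<gamma>cs unfolding cunit_ball_def \<gamma>_def rs_def by simp
    finally show ?thesis using eq by simp
  qed
  have strict: "(\<Sum>j<k. (cmod (\<beta> j))\<^sup>2) < 1"
  proof (rule ccontr)
    assume "\<not> ?thesis"
    then have ge: "(\<Sum>j<k. (cmod (\<beta> j))\<^sup>2) \<ge> 1" by simp
    obtain e where e: "e > 0" "ball p0 e \<subseteq> K" using p0 by (meson mem_interior)
    define d where "d = clin_comb k w \<beta>"
    define t where "t = e / (2 * (norm d + 1))"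
    have "2 * (norm d + 1) > 0" by (simp add: add_nonneg_pos)
    then have t: "t > 0" using e unfolding t_def by (simp only: divide_pos_pos)
    have td: "t * norm d < e"
    proof -
      have "t * norm d \<le> t * (norm d + 1)" using t by simp
      also have "\<dots> = e / 2" using \<open>2 * (norm d + 1) > 0\<close> unfolding t_def by (simp add: field_simps)
      finally show ?thesis using e by simp
    qed
    have "clin_comb k w (\<lambda>j. of_real t * \<beta> j) = t *\<^sub>R d"
      unfolding clin_comb_scale d_def by (simp add: vec_eq_iff scaleR_conv_of_real[where 'a=complex])
    then have "p0 + clin_comb k w (\<lambda>j. of_real t * \<beta> j) \<in> K"
      using e(2) td t by (auto simp: dist_norm)
    then have le: "(\<Sum>j<k. (cmod (\<beta> j + of_real t * \<beta> j))\<^sup>2) \<le> 1" using key[of "\<lambda>j. of_real t * \<beta> j"] by simp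
    have "(\<Sum>j<k. (cmod (\<beta> j + of_real t * \<beta> j))\<^sup>2) = (1+t)\<^sup>2 * (\<Sum>j<k. (cmod (\<beta> j))\<^sup>2)"
    proof -
      have "\<And>j. \<beta> j + of_real t * \<beta> j = of_real (1+t) * \<beta> j" by (simp add: algebra_simps)
      then show ?thesis using t
        by (simp add: norm_mult power_mult_distrib sum_distrib_left del: of_real_add)
    qed
    moreover have "(1+t)\<^sup>2 > (1::real)" using t by (simp add: power2_eq_square algebra_simps add_pos_pos)
    moreover have "(1+t)\<^sup>2 * (\<Sum>j<k. (cmod (\<beta> j))\<^sup>2) \<ge> (1+t)\<^sup>2 * 1"
      using ge by (intro mult_left_mono) auto
    ultimately show False using le by linarith
  qed
  show ?thesis using indw spaneq strict key by blast
qed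

lemma quad_set:
  fixes A B :: real assumes A: "A > 0"
  shows "{t. A*t^2 + 2*B*t \<le> 1} = {(-B - sqrt (B^2+A))/A .. (-B + sqrt (B^2+A))/A}"
proof -
  define s where "s = sqrt (B^2+A)"
  have "B^2 + A \<ge> 0" using A zero_le_power2[of B] by linarith
  then have s2: "s^2 = B^2 + A" unfolding s_def by simp
  have s0: "s \<ge> 0" unfolding s_def using \<open>B^2 + A \<ge> 0\<close> by simp
  define r1 where "r1 = (-B - s)/A"
  define r2 where "r2 = (-B + s)/A"
  have fact: "A*t^2 + 2*B*t - 1 = A * ((t - r1) * (t - r2))" for t
    unfolding r1_def r2_def using A s2 by (simp add: field_simps power2_eq_square)
  have r12: "r1 \<le> r2" unfolding r1_def r2_def using A s0 by (simp add: divide_right_mono)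
  have eqv: "A*t^2 + 2*B*t \<le> 1 \<longleftrightarrow> r1 \<le> t \<and> t \<le> r2" for t
  proof -
    have "A*t^2 + 2*B*t \<le> 1 \<longleftrightarrow> A * ((t - r1) * (t - r2)) \<le> A * 0" using fact[of t] by (simp only: mult_zero_right) linarith
    also have "\<dots> \<longleftrightarrow> (t - r1) * (t - r2) \<le> 0" using A by (rule mult_le_cancel_left_pos)
    also have "\<dots> \<longleftrightarrow> r1 \<le> t \<and> t \<le> r2" using r12 by (auto simp: mult_le_0_iff)
    finally show ?thesis .
  qed
  have "{t. A*t^2 + 2*B*t \<le> 1} = {r1..r2}" unfolding set_eq_iff atLeastAtMost_iff mem_Collect_eq using eqv by blast
  then show ?thesis unfolding r1_def r2_def s_def .
qed

lemma quad_unique: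
  fixes A B A' B' :: real
  assumes A: "A > 0" and A': "A' > 0" and eq: "\<And>t. A*t^2 + 2*B*t \<le> 1 \<longleftrightarrow> A'*t^2 + 2*B'*t \<le> 1"
  shows "A = A' \<and> B = B'"
proof -
  have r: "(-B - sqrt (B^2+A))/A \<le> (-B + sqrt (B^2+A))/A"
    using A by (simp add: divide_right_mono)
  have "{(-B - sqrt (B^2+A))/A .. (-B + sqrt (B^2+A))/A} = {(-B' - sqrt (B'^2+A'))/A' .. (-B' + sqrt (B'^2+A'))/A'}"
    using quad_set[OF A, of B] quad_set[OF A', of B'] eq by auto
  then have e1: "(-B - sqrt (B^2+A))/A = (-B' - sqrt (B'^2+A'))/A'"
       and e2: "(-B + sqrt (B^2+A))/A = (-B' + sqrt (B'^2+A'))/A'"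
    using r by (simp_all add: Icc_eq_Icc)
  have prod: "((-B - sqrt (B^2+A))/A) * ((-B + sqrt (B^2+A))/A) = -1/A"
    if "A > 0" for A B :: real
  proof -
    have "B^2 + A \<ge> 0" using that zero_le_power2[of B] by linarith
    then have "sqrt (B^2+A)^2 = B^2 + A" by simp
    then show ?thesis using that by (simp add: field_simps power2_eq_square)
  qed
  have "-1/A = ((-B - sqrt (B^2+A))/A) * ((-B + sqrt (B^2+A))/A)" using prod[OF A, of B] by simp
  also have "\<dots> = ((-B' - sqrt (B'^2+A'))/A') * ((-B' + sqrt (B'^2+A'))/A')" by (simp only: e1 e2)
  also have "\<dots> = -1/A'" using prod[OF A', of B'] by simp
  finally have "-1/A = -1/A'" .
  then have AA: "A = A'" by simp
  have "-2*B/A = ((-B - sqrt (B^2+A))/A) + ((-B + sqrt (B^2+A))/A)" unfolding add_divide_distrib[symmetric] by simp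
  also have "\<dots> = ((-B' - sqrt (B'^2+A'))/A') + ((-B' + sqrt (B'^2+A'))/A')" by (simp only: e1 e2)
  also have "\<dots> = -2*B'/A'" unfolding add_divide_distrib[symmetric] by simp
  finally have "-2*B/A = -2*B'/A" using AA by simp
  then have "B = B'" using A by (simp add: field_simps)
  with AA show ?thesis by simp
qed

definition qrep :: "(complex^'n) set \<Rightarrow> complex^'n \<Rightarrow> complex^'n \<Rightarrow> real \<Rightarrow> real \<Rightarrow> bool" where
  "qrep K p0 x A B \<longleftrightarrow> A > 0 \<and> (\<forall>t::real. p0 + of_real t *s x \<in> K \<longleftrightarrow> A*t^2 + 2*B*t \<le> 1)"

definition hm :: "(complex^'n) set \<Rightarrow> complex^'n \<Rightarrow> complex^'n \<Rightarrow> real \<times> real" where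
  "hm K p0 x = (if x = 0 then (0,0) else (SOME AB. qrep K p0 x (fst AB) (snd AB)))"

definition "hh K p0 x = fst (hm K p0 x)"
definition "mm K p0 x = snd (hm K p0 x)"

lemma hm_eq: assumes "x \<noteq> 0" "qrep K p0 x A B" shows "hh K p0 x = A" "mm K p0 x = B"
proof -
  have "qrep K p0 x (fst (SOME AB. qrep K p0 x (fst AB) (snd AB))) (snd (SOME AB. qrep K p0 x (fst AB) (snd AB)))"
    by (rule someI[where x="(A,B)"]) (use assms in simp)
  then have q: "qrep K p0 x (fst (hm K p0 x)) (snd (hm K p0 x))"
    unfolding hm_def using assms(1) by simp
  have q1: "p0 + of_real t *s x \<in> K \<longleftrightarrow> fst (hm K p0 x) * t^2 + 2 * snd (hm K p0 x) * t \<le> 1" for t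
    using q unfolding qrep_def by blast
  have q2: "p0 + of_real t *s x \<in> K \<longleftrightarrow> A * t^2 + 2 * B * t \<le> 1" for t
    using assms(2) unfolding qrep_def by blast
  have pos: "fst (hm K p0 x) > 0" "A > 0" using q assms(2) unfolding qrep_def by blast+
  have "fst (hm K p0 x) = A \<and> snd (hm K p0 x) = B"
    by (rule quad_unique[OF pos]) (simp only: q1[symmetric] q2[symmetric])
  then show "hh K p0 x = A" "mm K p0 x = B" by (simp_all add: hh_def mm_def)
qed

lemma hm_zero: "hh K p0 0 = 0" "mm K p0 0 = 0" by (simp_all add: hh_def mm_def hm_def)

lemma cmod_expand: "(cmod (b + of_real t * z))\<^sup>2 = (cmod b)\<^sup>2 + 2*t*Re (z * cnj b) + t^2 * (cmod z)\<^sup>2"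
proof -
  have "(cmod (b + of_real t * z))\<^sup>2 = (Re b + t * Re z)\<^sup>2 + (Im b + t * Im z)\<^sup>2"
    unfolding cmod_power2 by simp
  also have "\<dots> = ((Re b)\<^sup>2 + (Im b)\<^sup>2) + 2*t*(Re z * Re b + Im z * Im b) + t^2 * ((Re z)\<^sup>2 + (Im z)\<^sup>2)"
    by (simp add: power2_eq_square algebra_simps)
  also have "\<dots> = (cmod b)\<^sup>2 + 2*t*Re (z * cnj b) + t^2 * (cmod z)\<^sup>2"
    unfolding cmod_power2 by simp
  finally show ?thesis .
qed

locale setting =
  fixes K :: "(complex^'n) set" and p0 :: "complex^'n" and k :: nat
  assumes k2: "2 \<le> k" and kn: "k < CARD('n)" and p0: "p0 \<in> interior K"
    and hyp: "\<And>P. complex_affine_subspace_through k p0 P \<Longrightarrow> complex_ellipsoid_in k P (P \<inter> K)"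
begin

lemma core:
  fixes x y :: "complex^'n"
  shows "\<exists>w c D \<zeta>x \<zeta>y. D > 0 \<and> \<zeta>x \<in> cspace k \<and> \<zeta>y \<in> cspace k \<and>
     x = clin_comb k w \<zeta>x \<and> y = clin_comb k w \<zeta>y \<and>
     (\<forall>\<zeta>\<in>cspace k. hh K p0 (clin_comb k w \<zeta>) = (\<Sum>j<k. (cmod (\<zeta> j))\<^sup>2) / D \<and>
         mm K p0 (clin_comb k w \<zeta>) = Re (\<Sum>j<k. \<zeta> j * cnj (c j)) / D \<and>
         (clin_comb k w \<zeta> \<noteq> 0 \<longrightarrow> qrep K p0 (clin_comb k w \<zeta>) (hh K p0 (clin_comb k w \<zeta>)) (mm K p0 (clin_comb k w \<zeta>))))"
proof -
  obtain v where v: "clin_indep k v" "x \<in> vec.span (v ` {..<k})" "y \<in> vec.span (v ` {..<k})"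
    using extend_pair[of k x y] k2 kn by auto
  define P where "P = {p0 + clin_comb k v z | z. True}"
  have "complex_affine_subspace_through k p0 P"
    unfolding complex_affine_subspace_through_def P_def using v(1) by blast
  then have ell: "complex_ellipsoid_in k P (P \<inter> K)" by (rule hyp)
  obtain w c where w: "clin_indep k w" "vec.span (w ` {..<k}) = vec.span (v ` {..<k})"
      "(\<Sum>j<k. (cmod (c j))\<^sup>2) < 1"
      "\<And>\<zeta>. p0 + clin_comb k w \<zeta> \<in> K \<longleftrightarrow> (\<Sum>j<k. (cmod (c j + \<zeta> j))\<^sup>2) \<le> 1"
    using plane_coords[OF p0 v(1) ell[unfolded P_def]] by blast
  have injw: "inj_on w {..<k}" by (rule clin_indep_inj[OF w(1)])
  obtain \<zeta>x where \<zeta>x: "\<zeta>x \<in> cspace k" "x = clin_comb k w \<zeta>x"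
    using span_clin_comb[OF injw, of x] v(2) w(2) by auto
  obtain \<zeta>y where \<zeta>y: "\<zeta>y \<in> cspace k" "y = clin_comb k w \<zeta>y"
    using span_clin_comb[OF injw, of y] v(3) w(2) by auto
  define D where "D = 1 - (\<Sum>j<k. (cmod (c j))\<^sup>2)"
  have D: "D > 0" using w(3) by (simp add: D_def)
  have main: "hh K p0 (clin_comb k w \<zeta>) = (\<Sum>j<k. (cmod (\<zeta> j))\<^sup>2) / D \<and>
         mm K p0 (clin_comb k w \<zeta>) = Re (\<Sum>j<k. \<zeta> j * cnj (c j)) / D \<and>
         (clin_comb k w \<zeta> \<noteq> 0 \<longrightarrow> qrep K p0 (clin_comb k w \<zeta>) (hh K p0 (clin_comb k w \<zeta>)) (mm K p0 (clin_comb k w \<zeta>)))"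
    if \<zeta>: "\<zeta> \<in> cspace k" for \<zeta>
  proof -
    define u where "u = clin_comb k w \<zeta>"
    define S where "S = (\<Sum>j<k. (cmod (\<zeta> j))\<^sup>2)"
    define R where "R = Re (\<Sum>j<k. \<zeta> j * cnj (c j))"
    have rep: "p0 + of_real t *s u \<in> K \<longleftrightarrow> (S/D) * t^2 + 2 * (R/D) * t \<le> 1" for t
    proof -
      have "of_real t *s u = clin_comb k w (\<lambda>j. of_real t * \<zeta> j)"
        unfolding u_def clin_comb_scale ..
      then have "p0 + of_real t *s u \<in> K \<longleftrightarrow> (\<Sum>j<k. (cmod (c j + of_real t * \<zeta> j))\<^sup>2) \<le> 1"
        using w(4) by simp
      also have "(\<Sum>j<k. (cmod (c j + of_real t * \<zeta> j))\<^sup>2) = (\<Sum>j<k. (cmod (c j))\<^sup>2) + (\<Sum>j<k. 2*t*Re (\<zeta> j * cnj (c j))) + (\<Sum>j<k. t^2 * (cmod (\<zeta> j))\<^sup>2)"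
        by (simp only: cmod_expand sum.distrib)
      also have "\<dots> = (\<Sum>j<k. (cmod (c j))\<^sup>2) + 2*t*R + t^2 * S"
        by (simp only: R_def S_def Re_sum sum_distrib_left)
      also have "\<dots> \<le> 1 \<longleftrightarrow> (S/D) * t^2 + 2 * (R/D) * t \<le> 1"
      proof -
        have "(S/D) * t^2 + 2 * (R/D) * t = (S*t^2 + 2*R*t)/D" using D by (simp add: field_simps)
        then have "(S/D) * t^2 + 2 * (R/D) * t \<le> 1 \<longleftrightarrow> S*t^2 + 2*R*t \<le> D"
          using pos_divide_le_eq[OF D] by simp
        moreover have "2*t*R = 2*R*t" "t^2*S = S*t^2" by simp_all
        ultimately show ?thesis unfolding D_def by linarith
      qed
      finally show ?thesis .
    qed
    show ?thesis
    proof (cases "u = 0")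
      case True
      then have "\<forall>j<k. \<zeta> j = 0" using w(1) unfolding clin_indep_def u_def by blast
      then have "S = 0" "R = 0" unfolding S_def R_def by simp_all
      then show ?thesis using True unfolding u_def S_def R_def by (simp add: hh_def mm_def hm_def)
    next
      case False
      have "\<exists>j<k. \<zeta> j \<noteq> 0"
      proof (rule ccontr)
        assume "\<not> ?thesis"
        then have "u = clin_comb k w (\<lambda>j. 0)" unfolding u_def by (intro clin_comb_cong) auto
        with False show False by simp
      qed
      then obtain j where j: "j < k" "\<zeta> j \<noteq> 0" by blast
      have "S > 0" unfolding S_def by (rule sum_pos2[of _ j]) (use j in auto)
      then have q: "qrep K p0 u (S/D) (R/D)" unfolding qrep_def using rep D by simp
      then show ?thesis using hm_eq[OF False q] False unfolding u_def S_def R_def by simp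
    qed
  qed
  show ?thesis using D \<zeta>x \<zeta>y main by blast
qed

end

definition HH :: "(complex^'n) set \<Rightarrow> complex^'n \<Rightarrow> complex^'n \<Rightarrow> complex^'n \<Rightarrow> complex" where
  "HH K p0 x y = (complex_of_real (hh K p0 (x+y) - hh K p0 (x-y))
     + \<i> * complex_of_real (hh K p0 (x + \<i> *s y) - hh K p0 (x - \<i> *s y))) / 4"

lemma polar_id: "complex_of_real ((cmod (u+v))\<^sup>2) - complex_of_real ((cmod (u-v))\<^sup>2)
   + \<i> * (complex_of_real ((cmod (u + \<i> * v))\<^sup>2) - complex_of_real ((cmod (u - \<i> * v))\<^sup>2)) = 4 * (u * cnj v)"
  unfolding cmod_power2 by (simp add: complex_eq_iff power2_eq_square algebra_simps)

context setting begin


lemma pair: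
  fixes x y :: "complex^'n"
  shows "\<exists>(N::nat) p q a b. \<forall>\<alpha> \<beta>. hh K p0 (\<alpha> *s x + \<beta> *s y) = (\<Sum>j<N. (cmod (\<alpha> * p j + \<beta> * q j))\<^sup>2)
      \<and> mm K p0 (\<alpha> *s x + \<beta> *s y) = Re (\<alpha> * a + \<beta> * b)"
proof -
  obtain w c D \<zeta>x \<zeta>y where D: "D > 0" and cs: "\<zeta>x \<in> cspace k" "\<zeta>y \<in> cspace k"
    and xy: "x = clin_comb k w \<zeta>x" "y = clin_comb k w \<zeta>y"
    and main: "\<And>\<zeta>. \<zeta>\<in>cspace k \<Longrightarrow> hh K p0 (clin_comb k w \<zeta>) = (\<Sum>j<k. (cmod (\<zeta> j))\<^sup>2) / D \<and>
         mm K p0 (clin_comb k w \<zeta>) = Re (\<Sum>j<k. \<zeta> j * cnj (c j)) / D"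
    using core[of x y] by blast
  define s where "s = complex_of_real (sqrt D)"
  have s0: "s \<noteq> 0" using D by (simp add: s_def)
  have ss: "(cmod s)\<^sup>2 = D" using D by (simp add: s_def)
  define a where "a = (\<Sum>j<k. \<zeta>x j * cnj (c j)) / complex_of_real D"
  define b where "b = (\<Sum>j<k. \<zeta>y j * cnj (c j)) / complex_of_real D"
  have "hh K p0 (\<alpha> *s x + \<beta> *s y) = (\<Sum>j<k. (cmod (\<alpha> * (\<zeta>x j / s) + \<beta> * (\<zeta>y j / s)))\<^sup>2)
      \<and> mm K p0 (\<alpha> *s x + \<beta> *s y) = Re (\<alpha> * a + \<beta> * b)" for \<alpha> \<beta>
  proof -
    define \<zeta> where "\<zeta> = (\<lambda>j. \<alpha> * \<zeta>x j + \<beta> * \<zeta>y j)"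
    have \<zeta>cs: "\<zeta> \<in> cspace k" using cs by (auto simp: cspace_def \<zeta>_def)
    have eq: "\<alpha> *s x + \<beta> *s y = clin_comb k w \<zeta>" unfolding xy \<zeta>_def clin_comb_lin ..
    have "(\<Sum>j<k. (cmod (\<zeta> j))\<^sup>2) / D = (\<Sum>j<k. (cmod (\<alpha> * (\<zeta>x j / s) + \<beta> * (\<zeta>y j / s)))\<^sup>2)"
    proof -
      have "\<And>j. \<alpha> * (\<zeta>x j / s) + \<beta> * (\<zeta>y j / s) = \<zeta> j / s" unfolding \<zeta>_def using s0 by (simp add: field_simps)
      then show ?thesis using ss by (simp add: norm_divide power_divide sum_divide_distrib)
    qed
    moreover have "Re (\<Sum>j<k. \<zeta> j * cnj (c j)) / D = Re (\<alpha> * a + \<beta> * b)"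
    proof -
      have "(\<Sum>j<k. \<zeta> j * cnj (c j)) = \<alpha> * (\<Sum>j<k. \<zeta>x j * cnj (c j)) + \<beta> * (\<Sum>j<k. \<zeta>y j * cnj (c j))"
        unfolding \<zeta>_def by (simp add: sum.distrib sum_distrib_left algebra_simps)
      then have "(\<Sum>j<k. \<zeta> j * cnj (c j)) / complex_of_real D = \<alpha> * a + \<beta> * b"
        unfolding a_def b_def by (simp add: add_divide_distrib)
      then show ?thesis by (metis Re_divide_of_real)
    qed
    ultimately show ?thesis using main[OF \<zeta>cs] eq by simp
  qed
  note X = this
  show ?thesis
    by (rule exI, rule exI, rule exI, rule exI, rule exI, rule allI, rule allI, rule X)
qed

lemma qrep_h: assumes "x \<noteq> 0" shows "qrep K p0 x (hh K p0 x) (mm K p0 x)"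
proof -
  obtain w c D \<zeta>x \<zeta>y where cs: "\<zeta>x \<in> cspace k"
    and xy: "x = clin_comb k w \<zeta>x"
    and main: "\<And>\<zeta>. \<zeta>\<in>cspace k \<Longrightarrow>
         (clin_comb k w \<zeta> \<noteq> 0 \<longrightarrow> qrep K p0 (clin_comb k w \<zeta>) (hh K p0 (clin_comb k w \<zeta>)) (mm K p0 (clin_comb k w \<zeta>)))"
    using core[of x x] by blast
  show ?thesis using main[OF cs] assms xy by simp
qed

lemma h_pos: "x \<noteq> 0 \<Longrightarrow> hh K p0 x > 0" using qrep_h unfolding qrep_def by blast

lemma K_iff: "p0 + x \<in> K \<longleftrightarrow> hh K p0 x + 2 * mm K p0 x \<le> 1"
proof (cases "x = 0")
  case True
  then show ?thesis using p0 interior_subset by (auto simp: hh_def mm_def hm_def)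
next
  case False
  then have "p0 + of_real 1 *s x \<in> K \<longleftrightarrow> hh K p0 x * 1^2 + 2 * mm K p0 x * 1 \<le> 1"
    using qrep_h unfolding qrep_def by blast
  then show ?thesis by simp
qed

end

lemma cpar: "(cmod (u+v))\<^sup>2 + (cmod (u-v))\<^sup>2 = 2*(cmod u)\<^sup>2 + 2*(cmod v)\<^sup>2"
  unfolding cmod_power2 by (simp add: power2_eq_square algebra_simps)

lemma cg2: "(cmod (u + 2 * v))\<^sup>2 - (cmod (u - 2 * v))\<^sup>2 = 2*((cmod (u+v))\<^sup>2 - (cmod (u-v))\<^sup>2)"
  unfolding cmod_power2 by (simp add: power2_eq_square algebra_simps)

context setting begin

lemma par: "hh K p0 (x+y) + hh K p0 (x-y) = 2 * hh K p0 x + 2 * hh K p0 y"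
proof -
  obtain N :: nat and p q a b where e0: "\<forall>\<alpha> \<beta>. hh K p0 (\<alpha> *s x + \<beta> *s y) = (\<Sum>j<N. (cmod (\<alpha> * p j + \<beta> * q j))\<^sup>2)
      \<and> mm K p0 (\<alpha> *s x + \<beta> *s y) = Re (\<alpha> * a + \<beta> * b)"
    using pair[of x y] by blast
  have e: "\<And>\<alpha> \<beta>. hh K p0 (\<alpha> *s x + \<beta> *s y) = (\<Sum>j<N. (cmod (\<alpha> * p j + \<beta> * q j))\<^sup>2)"
    using e0 by blast
  have v: "x + y = 1 *s x + 1 *s y" "x - y = 1 *s x + (-1) *s y" "x = 1 *s x + 0 *s y" "y = 0 *s x + 1 *s y"
    by (simp_all add: vec_eq_iff)
  have "hh K p0 (x+y) + hh K p0 (x-y) = (\<Sum>j<N. (cmod (p j + q j))\<^sup>2 + (cmod (p j - q j))\<^sup>2)"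
    by (subst v(1), subst v(2), simp only: e sum.distrib) simp
  also have "\<dots> = (\<Sum>j<N. 2*(cmod (p j))\<^sup>2 + 2*(cmod (q j))\<^sup>2)" by (simp only: cpar)
  also have "\<dots> = 2 * hh K p0 x + 2 * hh K p0 y"
  proof -
    have hx: "hh K p0 x = (\<Sum>j<N. (cmod (p j))\<^sup>2)" using e[of 1 0] by simp
    have hy: "hh K p0 y = (\<Sum>j<N. (cmod (q j))\<^sup>2)" using e[of 0 1] by simp
    show ?thesis unfolding hx hy by (simp add: sum.distrib sum_distrib_left)
  qed
  finally show ?thesis .
qed

lemma g2: "hh K p0 (x + (y+y)) - hh K p0 (x - (y+y)) = 2 * (hh K p0 (x+y) - hh K p0 (x-y))"
proof -
  obtain N :: nat and p q a b where e0: "\<forall>\<alpha> \<beta>. hh K p0 (\<alpha> *s x + \<beta> *s y) = (\<Sum>j<N. (cmod (\<alpha> * p j + \<beta> * q j))\<^sup>2)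
      \<and> mm K p0 (\<alpha> *s x + \<beta> *s y) = Re (\<alpha> * a + \<beta> * b)"
    using pair[of x y] by blast
  have e: "\<And>\<alpha> \<beta>. hh K p0 (\<alpha> *s x + \<beta> *s y) = (\<Sum>j<N. (cmod (\<alpha> * p j + \<beta> * q j))\<^sup>2)"
    using e0 by blast
  have v: "x + (y+y) = 1 *s x + 2 *s y" "x - (y+y) = 1 *s x + (-2) *s y"
     "x + y = 1 *s x + 1 *s y" "x - y = 1 *s x + (-1) *s y"
    by (simp_all add: vec_eq_iff)
  have "hh K p0 (x + (y+y)) - hh K p0 (x - (y+y)) = (\<Sum>j<N. (cmod (p j + 2 * q j))\<^sup>2 - (cmod (p j - 2 * q j))\<^sup>2)"
    unfolding v e sum_subtractf by simp
  also have "\<dots> = (\<Sum>j<N. 2*((cmod (p j + q j))\<^sup>2 - (cmod (p j - q j))\<^sup>2))" by (simp only: cg2)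
  also have "\<dots> = 2 * (hh K p0 (x+y) - hh K p0 (x-y))"
    unfolding v e sum_subtractf sum_distrib_left[symmetric] by simp
  finally show ?thesis .
qed

lemma g_add: "hh K p0 ((x1+x2) + y) - hh K p0 ((x1+x2) - y) =
   (hh K p0 (x1 + y) - hh K p0 (x1 - y)) + (hh K p0 (x2 + y) - hh K p0 (x2 - y))"
proof -
  have 1: "hh K p0 ((x1+y)+(x2+y)) + hh K p0 ((x1+y)-(x2+y)) = 2 * hh K p0 (x1+y) + 2 * hh K p0 (x2+y)"
    by (rule par)
  have 2: "hh K p0 ((x1-y)+(x2-y)) + hh K p0 ((x1-y)-(x2-y)) = 2 * hh K p0 (x1-y) + 2 * hh K p0 (x2-y)"
    by (rule par)
  have 3: "hh K p0 ((x1+x2) + (y+y)) - hh K p0 ((x1+x2) - (y+y)) = 2 * (hh K p0 ((x1+x2)+y) - hh K p0 ((x1+x2)-y))"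
    by (rule g2)
  have v: "(x1+y)+(x2+y) = (x1+x2) + (y+y)" "(x1+y)-(x2+y) = x1 - x2" "(x1-y)+(x2-y) = (x1+x2) - (y+y)"
      "(x1-y)-(x2-y) = x1 - x2"
    by (simp_all add: algebra_simps)
  show ?thesis using 1 2 3 unfolding v by (smt (verit))
qed

lemma pairH:
  fixes x y :: "complex^'n"
  shows "\<exists>(N::nat) p q. \<forall>\<alpha> \<beta> \<gamma> \<delta>. HH K p0 (\<alpha> *s x + \<beta> *s y) (\<gamma> *s x + \<delta> *s y)
     = (\<Sum>j<N. (\<alpha> * p j + \<beta> * q j) * cnj (\<gamma> * p j + \<delta> * q j))"
proof -
  obtain N :: nat and p q a b where e0: "\<forall>\<alpha> \<beta>. hh K p0 (\<alpha> *s x + \<beta> *s y) = (\<Sum>j<N. (cmod (\<alpha> * p j + \<beta> * q j))\<^sup>2)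
      \<and> mm K p0 (\<alpha> *s x + \<beta> *s y) = Re (\<alpha> * a + \<beta> * b)"
    using pair[of x y] by blast
  have e: "\<And>\<alpha> \<beta>. hh K p0 (\<alpha> *s x + \<beta> *s y) = (\<Sum>j<N. (cmod (\<alpha> * p j + \<beta> * q j))\<^sup>2)"
    using e0 by blast
  have "HH K p0 (\<alpha> *s x + \<beta> *s y) (\<gamma> *s x + \<delta> *s y)
     = (\<Sum>j<N. (\<alpha> * p j + \<beta> * q j) * cnj (\<gamma> * p j + \<delta> * q j))" for \<alpha> \<beta> \<gamma> \<delta>
  proof -
    define u where "u = (\<lambda>j. \<alpha> * p j + \<beta> * q j)"
    define w where "w = (\<lambda>j. \<gamma> * p j + \<delta> * q j)"
    have v: "(\<alpha> *s x + \<beta> *s y) + (\<gamma> *s x + \<delta> *s y) = (\<alpha>+\<gamma>) *s x + (\<beta>+\<delta>) *s y"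
      "(\<alpha> *s x + \<beta> *s y) - (\<gamma> *s x + \<delta> *s y) = (\<alpha>-\<gamma>) *s x + (\<beta>-\<delta>) *s y"
      "(\<alpha> *s x + \<beta> *s y) + \<i> *s (\<gamma> *s x + \<delta> *s y) = (\<alpha>+\<i>*\<gamma>) *s x + (\<beta>+\<i>*\<delta>) *s y"
      "(\<alpha> *s x + \<beta> *s y) - \<i> *s (\<gamma> *s x + \<delta> *s y) = (\<alpha>-\<i>*\<gamma>) *s x + (\<beta>-\<i>*\<delta>) *s y"
      by (simp_all add: vec_eq_iff algebra_simps)
    have w1: "(\<alpha>+\<gamma>) * p j + (\<beta>+\<delta>) * q j = u j + w j"
      and w2: "(\<alpha>-\<gamma>) * p j + (\<beta>-\<delta>) * q j = u j - w j"
      and w3: "(\<alpha>+\<i>*\<gamma>) * p j + (\<beta>+\<i>*\<delta>) * q j = u j + \<i> * w j"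
      and w4: "(\<alpha>-\<i>*\<gamma>) * p j + (\<beta>-\<i>*\<delta>) * q j = u j - \<i> * w j" for j
      unfolding u_def w_def by (simp_all add: algebra_simps)
    have "HH K p0 (\<alpha> *s x + \<beta> *s y) (\<gamma> *s x + \<delta> *s y) =
      (\<Sum>j<N. complex_of_real ((cmod (u j + w j))\<^sup>2) - complex_of_real ((cmod (u j - w j))\<^sup>2)
          + \<i> * (complex_of_real ((cmod (u j + \<i> * w j))\<^sup>2) - complex_of_real ((cmod (u j - \<i> * w j))\<^sup>2))) / 4"
    proof -
      have s1: "complex_of_real ((\<Sum>j<N. (cmod (u j + w j))\<^sup>2) - (\<Sum>j<N. (cmod (u j - w j))\<^sup>2))
          = (\<Sum>j<N. complex_of_real ((cmod (u j + w j))\<^sup>2) - complex_of_real ((cmod (u j - w j))\<^sup>2))"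
        by (simp only: of_real_diff of_real_sum sum_subtractf)
      have s2: "\<i> * complex_of_real ((\<Sum>j<N. (cmod (u j + \<i> * w j))\<^sup>2) - (\<Sum>j<N. (cmod (u j - \<i> * w j))\<^sup>2))
          = (\<Sum>j<N. \<i> * (complex_of_real ((cmod (u j + \<i> * w j))\<^sup>2) - complex_of_real ((cmod (u j - \<i> * w j))\<^sup>2)))"
        by (simp only: of_real_diff of_real_sum sum_subtractf[symmetric] sum_distrib_left)
      show ?thesis unfolding HH_def v e w1 w2 w3 w4 s1 s2 sum.distrib[symmetric] ..
    qed
    also have "\<dots> = (\<Sum>j<N. u j * cnj (w j))"
      by (simp only: polar_id sum_distrib_left[symmetric]) simp
    finally show ?thesis unfolding u_def w_def .
  qed
  then show ?thesis by blast
qed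

end

context setting begin

lemma H_add1: "HH K p0 (x1 + x2) y = HH K p0 x1 y + HH K p0 x2 y"
proof -
  have a: "hh K p0 ((x1+x2) + y) - hh K p0 ((x1+x2) - y) =
   (hh K p0 (x1 + y) - hh K p0 (x1 - y)) + (hh K p0 (x2 + y) - hh K p0 (x2 - y))" by (rule g_add)
  have b: "hh K p0 ((x1+x2) + \<i> *s y) - hh K p0 ((x1+x2) - \<i> *s y) =
   (hh K p0 (x1 + \<i> *s y) - hh K p0 (x1 - \<i> *s y)) + (hh K p0 (x2 + \<i> *s y) - hh K p0 (x2 - \<i> *s y))" by (rule g_add)
  show ?thesis unfolding HH_def a b of_real_add by (simp add: field_simps)
qed

lemma getH:
  fixes x y :: "complex^'n"
  obtains N :: nat and p q where "\<And>\<alpha> \<beta> \<gamma> \<delta>. HH K p0 (\<alpha> *s x + \<beta> *s y) (\<gamma> *s x + \<delta> *s y)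
     = (\<Sum>j<N. (\<alpha> * p j + \<beta> * q j) * cnj (\<gamma> * p j + \<delta> * q j))"
  using pairH[of x y] by blast

lemma H_smult1: "HH K p0 (c *s x) y = c * HH K p0 x y"
proof -
  obtain N :: nat and p q where e: "\<And>\<alpha> \<beta> \<gamma> \<delta>. HH K p0 (\<alpha> *s x + \<beta> *s y) (\<gamma> *s x + \<delta> *s y)
     = (\<Sum>j<N. (\<alpha> * p j + \<beta> * q j) * cnj (\<gamma> * p j + \<delta> * q j))" by (rule getH[of x y]) blast
  have "HH K p0 (c *s x) y = HH K p0 (c *s x + 0 *s y) (0 *s x + 1 *s y)" by simp
  also have "\<dots> = (\<Sum>j<N. (c * p j + 0 * q j) * cnj (0 * p j + 1 * q j))" by (rule e)
  also have "\<dots> = c * (\<Sum>j<N. (1 * p j + 0 * q j) * cnj (0 * p j + 1 * q j))"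
    by (simp add: sum_distrib_left algebra_simps)
  also have "\<dots> = c * HH K p0 (1 *s x + 0 *s y) (0 *s x + 1 *s y)" by (simp only: e)
  finally show ?thesis by simp
qed

lemma H_sym: "HH K p0 y x = cnj (HH K p0 x y)"
proof -
  obtain N :: nat and p q where e: "\<And>\<alpha> \<beta> \<gamma> \<delta>. HH K p0 (\<alpha> *s x + \<beta> *s y) (\<gamma> *s x + \<delta> *s y)
     = (\<Sum>j<N. (\<alpha> * p j + \<beta> * q j) * cnj (\<gamma> * p j + \<delta> * q j))" by (rule getH[of x y]) blast
  have "HH K p0 y x = HH K p0 (0 *s x + 1 *s y) (1 *s x + 0 *s y)" by simp
  also have "\<dots> = (\<Sum>j<N. (0 * p j + 1 * q j) * cnj (1 * p j + 0 * q j))" by (rule e)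
  also have "\<dots> = cnj (\<Sum>j<N. (1 * p j + 0 * q j) * cnj (0 * p j + 1 * q j))"
    by (simp add: cnj_sum mult.commute)
  also have "\<dots> = cnj (HH K p0 (1 *s x + 0 *s y) (0 *s x + 1 *s y))" by (simp only: e)
  finally show ?thesis by simp
qed

lemma h_scale: "hh K p0 (c *s x) = (cmod c)\<^sup>2 * hh K p0 x"
proof -
  obtain N :: nat and p q a b where e0: "\<forall>\<alpha> \<beta>. hh K p0 (\<alpha> *s x + \<beta> *s x) = (\<Sum>j<N. (cmod (\<alpha> * p j + \<beta> * q j))\<^sup>2)
      \<and> mm K p0 (\<alpha> *s x + \<beta> *s x) = Re (\<alpha> * a + \<beta> * b)"
    using pair[of x x] by blast
  have "hh K p0 (c *s x) = hh K p0 (c *s x + 0 *s x)" by simp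
  also have "\<dots> = (\<Sum>j<N. (cmod (c * p j + 0 * q j))\<^sup>2)" using e0 by blast
  also have "\<dots> = (cmod c)\<^sup>2 * (\<Sum>j<N. (cmod (1 * p j + 0 * q j))\<^sup>2)"
    by (simp add: norm_mult power_mult_distrib sum_distrib_left)
  also have "(\<Sum>j<N. (cmod (1 * p j + 0 * q j))\<^sup>2) = hh K p0 (1 *s x + 0 *s x)" using e0[rule_format, of 1 0] by (simp only:)
  finally show ?thesis by simp
qed

lemma H_self: "HH K p0 x x = complex_of_real (hh K p0 x)"
proof -
  have v: "x + x = 2 *s x" "x - x = 0 *s x" "x + \<i> *s x = (1 + \<i>) *s x" "x - \<i> *s x = (1 - \<i>) *s x"
    by (simp_all add: vec_eq_iff algebra_simps)
  have c1: "(cmod (1 + \<i>))\<^sup>2 = 2" "(cmod (1 - \<i>))\<^sup>2 = 2" by (simp_all add: cmod_power2)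
  show ?thesis unfolding HH_def v h_scale c1 by simp
qed

end

context setting begin

lemma H_zero1: "HH K p0 0 y = 0"
  using H_smult1[of 0 0 y] by simp

lemma H_diff1: "HH K p0 (x1 - x2) y = HH K p0 x1 y - HH K p0 x2 y"
  using H_add1[of "x1 - x2" x2 y] by simp

lemma H_sum1: "finite S \<Longrightarrow> HH K p0 (\<Sum>i\<in>S. f i) y = (\<Sum>i\<in>S. HH K p0 (f i) y)"
  by (induction S rule: finite_induct) (simp_all add: H_zero1 H_add1)

lemma H_clin1: "HH K p0 (clin_comb n v z) y = (\<Sum>i<n. z i * HH K p0 (v i) y)"
  unfolding clin_comb_def by (simp add: H_sum1 H_smult1)

lemma H_clin2: "HH K p0 y (clin_comb n v z) = (\<Sum>i<n. cnj (z i) * HH K p0 y (v i))"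
  by (subst H_sym) (simp add: H_clin1 cnj_sum H_sym[of y])

lemma H_smult2: "HH K p0 x (c *s y) = cnj c * HH K p0 x y"
  by (subst H_sym) (simp add: H_smult1 H_sym[of x])

definition orthon :: "nat \<Rightarrow> (nat \<Rightarrow> complex^'n) \<Rightarrow> bool" where
  "orthon j v \<longleftrightarrow> (\<forall>i<j. \<forall>l<j. HH K p0 (v i) (v l) = (if i = l then 1 else 0))"

lemma orthon_coord:
  assumes "orthon j v" "l < j"
  shows "HH K p0 (clin_comb j v z) (v l) = z l"
proof -
  have "HH K p0 (clin_comb j v z) (v l) = (\<Sum>i<j. z i * (if i = l then 1 else 0))"
    unfolding H_clin1 using assms unfolding orthon_def by (intro sum.cong) auto
  also have "\<dots> = z l" using assms(2) by (simp add: if_distrib cong: if_cong)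
  finally show ?thesis .
qed

lemma orthon_indep: assumes "orthon j v" shows "clin_indep j v"
  unfolding clin_indep_def
proof (intro allI impI)
  fix z i assume "clin_comb j v z = 0" "i < j"
  then show "z i = 0" using orthon_coord[OF assms, of i z] H_zero1 by simp
qed

lemma gram_schmidt: "j \<le> CARD('n) \<Longrightarrow> \<exists>v. orthon j v"
proof (induction j)
  case 0
  then show ?case by (simp add: orthon_def)
next
  case (Suc j)
  then obtain v where v: "orthon j v" by auto
  have j: "j < CARD('n)" using Suc.prems by simp
  have ind: "clin_indep j v" by (rule orthon_indep[OF v])
  have "vec.span (v ` {..<j}) \<noteq> UNIV"
  proof
    assume "vec.span (v ` {..<j}) = UNIV"
    then have "vec.dim (UNIV :: (complex^'n) set) = vec.dim (v ` {..<j})" by (metis vec.dim_span)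
    also have "\<dots> = j" using vec.dim_eq_card_independent[OF clin_indep_independent[OF ind]]
      card_image[OF clin_indep_inj[OF ind]] by simp
    finally show False using j dim_UNIV_vec[where 'n='n] by simp
  qed
  then obtain w where w: "w \<notin> vec.span (v ` {..<j})" by blast
  define w' where "w' = w - clin_comb j v (\<lambda>i. HH K p0 w (v i))"
  have w'0: "w' \<noteq> 0"
  proof
    assume "w' = 0"
    then have "w = clin_comb j v (\<lambda>i. HH K p0 w (v i))" by (simp add: w'_def)
    then show False using w clin_comb_in_span by metis
  qed
  have orth: "HH K p0 w' (v l) = 0" if "l < j" for l
    unfolding w'_def H_diff1 orthon_coord[OF v that] by simp
  define c where "c = complex_of_real (1 / sqrt (hh K p0 w'))"
  define u where "u = c *s w'"
  have hpos: "hh K p0 w' > 0" by (rule h_pos[OF w'0])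
  have "(cmod c)\<^sup>2 = 1 / hh K p0 w'" using hpos unfolding c_def by (simp add: norm_divide power_divide)
  then have uu: "HH K p0 u u = 1"
    unfolding u_def H_self h_scale using hpos by simp
  have uv: "HH K p0 u (v l) = 0" "HH K p0 (v l) u = 0" if "l < j" for l
    using orth[OF that] unfolding u_def H_smult1 H_smult2
    by (simp_all add: H_sym[of "v l" w'])
  have "orthon (Suc j) (v(j := u))"
    unfolding orthon_def
  proof (intro allI impI)
    fix i l assume il: "i < Suc j" "l < Suc j"
    show "HH K p0 ((v(j := u)) i) ((v(j := u)) l) = (if i = l then 1 else 0)"
    proof (cases "i = j")
      case True
      then show ?thesis using il uu uv(1)[of l] by (cases "l = j") auto
    next
      case False
      then have i: "i < j" using il by simp
      then show ?thesis using v il uv(2)[of i] unfolding orthon_def by (cases "l = j") auto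
    qed
  qed
  then show ?case by blast
qed

lemma m_parts:
  shows "mm K p0 (x + y) = mm K p0 x + mm K p0 y" and "mm K p0 (complex_of_real r *s x) = r * mm K p0 x"
proof -
  obtain N :: nat and p q a b where e0: "\<forall>\<alpha> \<beta>. hh K p0 (\<alpha> *s x + \<beta> *s y) = (\<Sum>j<N. (cmod (\<alpha> * p j + \<beta> * q j))\<^sup>2)
      \<and> mm K p0 (\<alpha> *s x + \<beta> *s y) = Re (\<alpha> * a + \<beta> * b)"
    using pair[of x y] by blast
  have e: "\<And>\<alpha> \<beta>. mm K p0 (\<alpha> *s x + \<beta> *s y) = Re (\<alpha> * a + \<beta> * b)" using e0 by blast
  have "mm K p0 (x + y) = mm K p0 (1 *s x + 1 *s y)" by simp
  also have "\<dots> = Re a + Re b" by (simp only: e) simp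
  also have "Re a = mm K p0 (1 *s x + 0 *s y)" by (simp only: e) simp
  also have "Re b = mm K p0 (0 *s x + 1 *s y)" by (simp only: e) simp
  finally show "mm K p0 (x + y) = mm K p0 x + mm K p0 y" by simp
  have "mm K p0 (complex_of_real r *s x) = mm K p0 (complex_of_real r *s x + 0 *s y)" by simp
  also have "\<dots> = r * Re a" by (simp only: e) simp
  also have "Re a = mm K p0 (1 *s x + 0 *s y)" by (simp only: e) simp
  finally show "mm K p0 (complex_of_real r *s x) = r * mm K p0 x" by simp
qed

lemma m_zero: "mm K p0 0 = 0" by (simp add: mm_def hm_def)

lemma m_sum: "finite S \<Longrightarrow> mm K p0 (\<Sum>i\<in>S. f i) = (\<Sum>i\<in>S. mm K p0 (f i))"
  by (induction S rule: finite_induct) (simp_all add: m_zero m_parts(1))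

lemma m_cscale: "mm K p0 (c *s x) = Re c * mm K p0 x + Im c * mm K p0 (\<i> *s x)"
proof -
  have "c *s x = complex_of_real (Re c) *s x + complex_of_real (Im c) *s (\<i> *s x)"
    by (simp add: vec_eq_iff algebra_simps complex_eq_iff)
  then show ?thesis by (simp only: m_parts)
qed

end

lemma clin_comb_diff: "clin_comb m v (\<lambda>i. z i - w i) = clin_comb m v z - clin_comb m v w"
  unfolding clin_comb_def by (simp add: vec.scale_left_diff_distrib sum_subtractf)

context setting begin

lemma extend_orthon:
  assumes v: "orthon j v" and w'0: "w' \<noteq> 0" and orth: "\<And>l. l < j \<Longrightarrow> HH K p0 w' (v l) = 0"
  shows "\<exists>u. orthon (Suc j) (v(j := u))"
proof -
  define c where "c = complex_of_real (1 / sqrt (hh K p0 w'))"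
  define u where "u = c *s w'"
  have hpos: "hh K p0 w' > 0" by (rule h_pos[OF w'0])
  have "(cmod c)\<^sup>2 = 1 / hh K p0 w'" using hpos unfolding c_def by (simp add: norm_divide power_divide)
  then have uu: "HH K p0 u u = 1"
    unfolding u_def H_self h_scale using hpos by simp
  have uv: "HH K p0 u (v l) = 0" "HH K p0 (v l) u = 0" if "l < j" for l
    using orth[OF that] unfolding u_def H_smult1 H_smult2
    by (simp_all add: H_sym[of "v l" w'])
  have "orthon (Suc j) (v(j := u))"
    unfolding orthon_def
  proof (intro allI impI)
    fix i l assume il: "i < Suc j" "l < Suc j"
    show "HH K p0 ((v(j := u)) i) ((v(j := u)) l) = (if i = l then 1 else 0)"
    proof (cases "i = j")
      case True
      then show ?thesis using il uu uv(1)[of l] by (cases "l = j") auto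
    next
      case False
      then have i: "i < j" using il by simp
      then show ?thesis using v il uv(2)[of i] unfolding orthon_def by (cases "l = j") auto
    qed
  qed
  then show ?thesis by blast
qed

lemma final: "complex_ellipsoid K"
proof -
  define n where "n = CARD('n)"
  obtain v where v: "orthon n v" using gram_schmidt[of n] by (auto simp: n_def)
  have coords: "x = clin_comb n v (\<lambda>i. HH K p0 x (v i))" for x
  proof (rule ccontr)
    assume ne: "x \<noteq> clin_comb n v (\<lambda>i. HH K p0 x (v i))"
    define d where "d = x - clin_comb n v (\<lambda>i. HH K p0 x (v i))"
    have d0: "d \<noteq> 0" using ne by (simp add: d_def)
    have "HH K p0 d (v l) = 0" if "l < n" for l
      unfolding d_def H_diff1 orthon_coord[OF v that] by simp
    then obtain u where "orthon (Suc n) (v(n := u))" using extend_orthon[OF v d0] by blast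
    then have "clin_indep (Suc n) (v(n := u))" by (rule orthon_indep)
    then have "Suc n \<le> CARD('n)" by (rule clin_indep_le)
    then show False by (simp add: n_def)
  qed
  have hcc: "hh K p0 (clin_comb n v z) = (\<Sum>i<n. (cmod (z i))\<^sup>2)" for z
  proof -
    have "complex_of_real (hh K p0 (clin_comb n v z)) = HH K p0 (clin_comb n v z) (clin_comb n v z)"
      by (simp add: H_self)
    also have "\<dots> = (\<Sum>i<n. cnj (z i) * z i)"
      unfolding H_clin2 orthon_coord[OF v] by (intro sum.cong) (auto simp: orthon_coord[OF v])
    also have "\<dots> = complex_of_real (\<Sum>i<n. (cmod (z i))\<^sup>2)"
      unfolding of_real_sum complex_norm_square by (simp add: mult.commute)
    finally show ?thesis by (simp only: of_real_eq_iff)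
  qed
  define cv where "cv = (\<lambda>i. complex_of_real (mm K p0 (v i)) + \<i> * complex_of_real (mm K p0 (\<i> *s v i)))"
  have mcc: "mm K p0 (clin_comb n v z) = (\<Sum>i<n. Re (z i * cnj (cv i)))" for z
    unfolding clin_comb_def m_sum[OF finite_lessThan]
  proof (rule sum.cong[OF refl])
    fix i show "mm K p0 (z i *s v i) = Re (z i * cnj (cv i))"
      using m_cscale[of "z i" "v i"] by (simp add: cv_def)
  qed
  have Kc: "p0 + clin_comb n v z \<in> K \<longleftrightarrow> (\<Sum>i<n. (cmod (z i + cv i))\<^sup>2) \<le> 1 + (\<Sum>i<n. (cmod (cv i))\<^sup>2)" for z
  proof -
    have e: "(cmod (z i + cv i))\<^sup>2 = (cmod (cv i))\<^sup>2 + 2 * Re (z i * cnj (cv i)) + (cmod (z i))\<^sup>2" for i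
      using cmod_expand[of "cv i" 1 "z i"] by (simp add: add.commute)
    have "(\<Sum>i<n. (cmod (z i + cv i))\<^sup>2) = (\<Sum>i<n. (cmod (cv i))\<^sup>2) + 2 * (\<Sum>i<n. Re (z i * cnj (cv i))) + (\<Sum>i<n. (cmod (z i))\<^sup>2)"
      unfolding e by (simp add: sum.distrib sum_distrib_left)
    then show ?thesis unfolding K_iff hcc mcc by linarith
  qed
  define R where "R = sqrt (1 + (\<Sum>i<n. (cmod (cv i))\<^sup>2))"
  have R0: "R > 0" unfolding R_def by (simp add: add_pos_nonneg sum_nonneg)
  have R2: "R\<^sup>2 = 1 + (\<Sum>i<n. (cmod (cv i))\<^sup>2)" unfolding R_def by (simp add: add_nonneg_nonneg sum_nonneg)
  define a where "a = p0 - clin_comb n v cv"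
  define w where "w = (\<lambda>i. complex_of_real R *s v i)"
  define f where "f = (\<lambda>\<zeta>. a + clin_comb n w \<zeta>)"
  have fw: "clin_comb n w \<zeta> = clin_comb n v (\<lambda>i. complex_of_real R * \<zeta> i)" for \<zeta>
    unfolding clin_comb_def w_def by (simp add: mult.commute)
  have f_eq: "f \<zeta> = p0 + clin_comb n v (\<lambda>i. complex_of_real R * \<zeta> i - cv i)" for \<zeta>
    unfolding f_def fw a_def clin_comb_diff by simp
  have inj: "inj_on f (cspace n)"
  proof (rule inj_onI)
    fix \<zeta> \<zeta>' assume z: "\<zeta> \<in> cspace n" "\<zeta>' \<in> cspace n" and eq: "f \<zeta> = f \<zeta>'"
    show "\<zeta> = \<zeta>'"
    proof
      fix l
      show "\<zeta> l = \<zeta>' l"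
      proof (cases "l < n")
        case True
        have "HH K p0 (f \<zeta> - p0) (v l) = HH K p0 (f \<zeta>' - p0) (v l)" using eq by simp
        then have "complex_of_real R * \<zeta> l - cv l = complex_of_real R * \<zeta>' l - cv l"
          unfolding f_eq by (simp add: orthon_coord[OF v True])
        then show ?thesis using R0 by simp
      next
        case False
        then show ?thesis using z by (simp add: cspace_def)
      qed
    qed
  qed
  have "K = f ` cunit_ball n"
  proof
    show "K \<subseteq> f ` cunit_ball n"
    proof
      fix x assume x: "x \<in> K"
      define z where "z = (\<lambda>i. HH K p0 (x - p0) (v i))"
      have xz: "x = p0 + clin_comb n v z" using coords[of "x - p0"] unfolding z_def by simp
      have le: "(\<Sum>i<n. (cmod (z i + cv i))\<^sup>2) \<le> R\<^sup>2" using x Kc[of z] xz R2 by simp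
      define \<zeta> where "\<zeta> = (\<lambda>i. if i < n then (z i + cv i) / complex_of_real R else 0)"
      have "(\<Sum>i<n. (cmod (\<zeta> i))\<^sup>2) = (\<Sum>i<n. (cmod (z i + cv i))\<^sup>2) / R\<^sup>2"
        unfolding \<zeta>_def using R0 by (simp add: norm_divide power_divide sum_divide_distrib)
      also have "\<dots> \<le> 1" using le R0 by simp
      finally have "\<zeta> \<in> cunit_ball n" by (simp add: cunit_ball_def cspace_def \<zeta>_def)
      moreover have "f \<zeta> = x"
      proof -
        have "clin_comb n v (\<lambda>i. complex_of_real R * \<zeta> i - cv i) = clin_comb n v z"
          by (rule clin_comb_cong) (use R0 in \<open>simp add: \<zeta>_def\<close>)
        then show ?thesis unfolding f_eq xz by simp
      qed
      ultimately show "x \<in> f ` cunit_ball n" by blast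
    qed
  next
    show "f ` cunit_ball n \<subseteq> K"
    proof
      fix x assume "x \<in> f ` cunit_ball n"
      then obtain \<zeta> where \<zeta>: "\<zeta> \<in> cunit_ball n" "x = f \<zeta>" by blast
      define z where "z = (\<lambda>i. complex_of_real R * \<zeta> i - cv i)"
      have "(\<Sum>i<n. (cmod (z i + cv i))\<^sup>2) = R\<^sup>2 * (\<Sum>i<n. (cmod (\<zeta> i))\<^sup>2)"
        unfolding z_def by (simp add: norm_mult power_mult_distrib sum_distrib_left)
      also have "\<dots> \<le> R\<^sup>2" using \<zeta>(1) mult_left_mono[of "\<Sum>i<n. (cmod (\<zeta> i))\<^sup>2" 1 "R\<^sup>2"] by (simp add: cunit_ball_def)
      finally show "x \<in> K" using Kc[of z] R2 \<zeta>(2) f_eq[of \<zeta>] unfolding z_def by simp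
    qed
  qed
  then show ?thesis
    unfolding complex_ellipsoid_def complex_ellipsoid_in_def n_def[symmetric] Let_def
    using inj unfolding f_def by blast
qed

end


theorem theorem4p1:
  fixes K :: "(complex^'n) set" and p0 :: "complex^'n" and k :: nat
  assumes "2 \<le> k" and "k < CARD('n)"
    and "convex_body K"
    and "p0 \<in> interior K"
    and "\<And>P. complex_affine_subspace_through k p0 P \<Longrightarrow> complex_ellipsoid_in k P (P \<inter> K)"
  shows "complex_ellipsoid K"
proof -
  interpret S: setting K p0 k
    by (rule setting.intro) (use assms in auto)
  show ?thesis by (rule S.final)
qed

end
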